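(* Let $\mathcal H$ be a complex Hilbert space, $T\in\boldsymbol B(\mathcal H)$ a quasinormal operator that is not normal, and $n$ an integer greater than $1$. If there exists a quasinormal $Q\in\boldsymbol B(\mathcal H)$ with $Q^n=T$, then there exists $R\in\boldsymbol B(\mathcal H)$ which is not quasinormal and satisfies $R^n=T$.
   Context: A bounded operator $T$ is normal if $T^*T=TT^*$ and quasinormal if $T(T^*T)=(T^*T)T$. *)

theory Defs
  imports "HOL-Analysis.Analysis"
begin

class complex_vector = real_vector +
  fixes scaleC :: "complex \<Rightarrow> 'a \<Rightarrow> 'a" (infixr \<open>*\<^sub>C\<close> 75)
  assumes scaleC_add_right: "a *\<^sub>C (x + y) = a *\<^sub>C x + a *\<^sub>C y"
    and scaleC_add_left: "(a + b) *\<^sub>C x = a *\<^sub>C x + b *\<^sub>C x"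
    and scaleC_scaleC: "a *\<^sub>C (b *\<^sub>C x) = (a * b) *\<^sub>C x"
    and scaleC_one: "1 *\<^sub>C x = x"
    and scaleR_scaleC: "scaleR r x = complex_of_real r *\<^sub>C x"

class complex_inner = complex_vector + real_normed_vector +
  fixes cinner :: "'a \<Rightarrow> 'a \<Rightarrow> complex"
  assumes cinner_conj: "cinner x y = cnj (cinner y x)"
    and cinner_add_right: "cinner x (y + z) = cinner x y + cinner x z"
    and cinner_scaleC_right: "cinner x (a *\<^sub>C y) = a * cinner x y"
    and cinner_nonneg: "Re (cinner x x) \<ge> 0"
    and cinner_eq_zero_iff: "cinner x x = 0 \<longleftrightarrow> x = 0"
    and norm_eq_sqrt_cinner: "norm x = sqrt (Re (cinner x x))"

class chilbert_space = complex_inner + complete_space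

definition bounded_clinear_op :: "('a::complex_inner \<Rightarrow> 'a) \<Rightarrow> bool" where
  "bounded_clinear_op T \<longleftrightarrow> bounded_linear T \<and> (\<forall>a x. T (a *\<^sub>C x) = a *\<^sub>C T x)"

text \<open>Hilbert space adjoint T* (unique when it exists; exists for bounded T on a Hilbert space).\<close>
definition cadjoint :: "('a::complex_inner \<Rightarrow> 'a) \<Rightarrow> ('a \<Rightarrow> 'a)" where
  "cadjoint T = (SOME S. \<forall>x y. cinner (T x) y = cinner x (S y))"

definition normal_op :: "('a::complex_inner \<Rightarrow> 'a) \<Rightarrow> bool" where
  "normal_op T \<longleftrightarrow> cadjoint T \<circ> T = T \<circ> cadjoint T"

definition quasinormal_op :: "('a::complex_inner \<Rightarrow> 'a) \<Rightarrow> bool" where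
  "quasinormal_op T \<longleftrightarrow> T \<circ> (cadjoint T \<circ> T) = (cadjoint T \<circ> T) \<circ> T"

end

theory Submission
  imports Defs
begin

lemma cinner_zero_right[simp]: "cinner x (0::'a::complex_inner) = 0"
proof -
  have "cinner x (0+0) = cinner x 0 + cinner x (0::'a)" by (rule cinner_add_right)
  then show ?thesis by simp
qed

lemma cinner_zero_left[simp]: "cinner (0::'a::complex_inner) x = 0"
  by (subst cinner_conj) simp

lemma cinner_add_left: "cinner (x+y) (z::'a::complex_inner) = cinner x z + cinner y z"
  by (subst (1 2 3) cinner_conj) (simp add: cinner_add_right)

lemma cinner_scaleC_left: "cinner (a *\<^sub>C x) (y::'a::complex_inner) = cnj a * cinner x y"
  by (subst (1 2) cinner_conj) (simp add: cinner_scaleC_right)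

lemma cinner_minus_right: "cinner x (- y) = - cinner x (y::'a::complex_inner)"
proof -
  have "cinner x y + cinner x (-y) = 0"
    by (metis cinner_add_right cinner_zero_right right_minus)
  then show ?thesis by (simp add: eq_neg_iff_add_eq_0 add.commute)
qed

lemma cinner_minus_left: "cinner (- x) y = - cinner x (y::'a::complex_inner)"
  by (subst (1 2) cinner_conj) (simp add: cinner_minus_right)

lemma cinner_diff_right: "cinner x (y - z) = cinner x y - cinner x (z::'a::complex_inner)"
  by (simp only: diff_conv_add_uminus cinner_add_right cinner_minus_right)

lemma cinner_diff_left: "cinner (x - y) z = cinner x z - cinner y (z::'a::complex_inner)"
  by (simp only: diff_conv_add_uminus cinner_add_left cinner_minus_left)

lemma cinner_scaleR_right: "cinner x (r *\<^sub>R y) = complex_of_real r * cinner x (y::'a::complex_inner)"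
  by (simp add: scaleR_scaleC cinner_scaleC_right)

lemma cinner_self_real: "cinner x x = complex_of_real ((norm (x::'a::complex_inner))^2)"
proof -
  have "Im (cinner x x) = 0"
  proof -
    have "Im (cinner x x) = Im (cnj (cinner x x))" using cinner_conj[of x x] by simp
    then show ?thesis by simp
  qed
  moreover have "Re (cinner x x) = (norm x)^2"
    using norm_eq_sqrt_cinner[of x] cinner_nonneg[of x] by simp
  ultimately show ?thesis by (simp add: complex_eq_iff)
qed

lemma cinner_self_zero_iff: "cinner x x = 0 \<longleftrightarrow> x = (0::'a::complex_inner)"
  by (rule cinner_eq_zero_iff)

lemma scaleC_zero_right[simp]: "a *\<^sub>C (0::'a::complex_vector) = 0"
proof -
  have "a *\<^sub>C (0::'a) = a *\<^sub>C (0 + 0)" by simp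
  also have "... = a *\<^sub>C 0 + a *\<^sub>C 0" by (rule scaleC_add_right)
  finally show ?thesis by simp
qed

lemma scaleC_zero_left[simp]: "0 *\<^sub>C (x::'a::complex_vector) = 0"
proof -
  have "0 *\<^sub>C x = (0 + 0) *\<^sub>C x" by simp
  also have "... = 0 *\<^sub>C x + 0 *\<^sub>C x" by (rule scaleC_add_left)
  finally show ?thesis by simp
qed

lemma scaleC_minus1: "(-1) *\<^sub>C (x::'a::complex_vector) = - x"
  using scaleR_scaleC[of "-1" x] by simp

lemma scaleC_minus_right: "a *\<^sub>C (- x) = - (a *\<^sub>C (x::'a::complex_vector))"
  by (simp only: scaleC_minus1[symmetric] scaleC_scaleC mult.commute)

lemma scaleC_diff_right: "a *\<^sub>C (x - y) = a *\<^sub>C x - a *\<^sub>C (y::'a::complex_vector)"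
  by (simp only: diff_conv_add_uminus scaleC_add_right scaleC_minus_right)

lemma scaleC_diff_left: "(a - b) *\<^sub>C x = a *\<^sub>C x - b *\<^sub>C (x::'a::complex_vector)"
proof -
  have "a *\<^sub>C x = (a - b) *\<^sub>C x + b *\<^sub>C x" by (simp flip: scaleC_add_left)
  then show ?thesis by (simp add: algebra_simps)
qed

lemma pyth: assumes "cinner x y = 0" shows "(norm (x + y))^2 = (norm x)^2 + (norm (y::'a::complex_inner))^2"
proof -
  have "cinner y x = 0" using assms cinner_conj[of y x] by simp
  then have "cinner (x+y) (x+y) = cinner x x + cinner y y"
    using assms by (simp add: cinner_add_left cinner_add_right)
  then have "complex_of_real ((norm (x+y))^2) = complex_of_real ((norm x)^2 + (norm y)^2)"
    unfolding cinner_self_real of_real_add by simp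
  then show ?thesis by (simp only: of_real_eq_iff)
qed

lemma norm_scaleC: "norm (a *\<^sub>C x) = cmod a * norm (x::'a::complex_inner)"
proof -
  have "cinner (a *\<^sub>C x) (a *\<^sub>C x) = (cnj a * a) * cinner x x"
    by (simp add: cinner_scaleC_left cinner_scaleC_right)
  also have "cnj a * a = complex_of_real ((cmod a)^2)"
    by (metis complex_norm_square mult.commute)
  also have "... * cinner x x = complex_of_real ((cmod a)^2 * (norm x)^2)"
    by (simp only: cinner_self_real of_real_mult)
  finally have "(norm (a *\<^sub>C x))^2 = ((cmod a)^2) * (norm x)^2"
    by (simp only: cinner_self_real of_real_eq_iff)
  then have "(norm (a *\<^sub>C x))^2 = (cmod a * norm x)^2" by (simp add: power_mult_distrib)
  then show ?thesis by (simp add: power2_eq_iff_nonneg)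
qed

lemma cauchy_schwarz: "cmod (cinner x y) \<le> norm x * norm (y::'a::complex_inner)"
proof (cases "x = 0")
  case True then show ?thesis by simp
next
  case False
  define a where "a = cinner x y / cinner x x"
  define z where "z = y - a *\<^sub>C x"
  have xx: "cinner x x \<noteq> 0" using False cinner_eq_zero_iff by blast
  have "cinner x z = 0" using xx unfolding z_def a_def
    by (simp add: cinner_diff_right cinner_scaleC_right)
  then have "cinner z (a *\<^sub>C x) = 0"
    by (metis cinner_conj cinner_scaleC_right complex_cnj_zero mult_zero_right)
  then have "(norm y)^2 = (norm z)^2 + (norm (a *\<^sub>C x))^2"
    using pyth[of z "a *\<^sub>C x"] unfolding z_def by simp
  then have "(norm (a *\<^sub>C x))^2 \<le> (norm y)^2" by simp
  then have "cmod a * norm x \<le> norm y"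
    by (simp add: norm_scaleC power_mono_iff)
  moreover have "cmod a = cmod (cinner x y) / (norm x)^2"
    unfolding a_def norm_divide cinner_self_real norm_of_real by simp
  ultimately have "cmod (cinner x y) / (norm x)^2 * norm x \<le> norm y" by simp
  moreover have "norm x > 0" using False by simp
  ultimately have "cmod (cinner x y) / norm x \<le> norm y"
    by (simp add: power2_eq_square)
  then show ?thesis using \<open>norm x > 0\<close>
    by (simp add: divide_le_eq mult.commute)
qed


lemma cinner_ext: assumes "\<And>x. cinner x a = cinner x (b::'a::complex_inner)" shows "a = b"
proof -
  have "cinner (a - b) (a - b) = cinner (a - b) a - cinner (a - b) b" by (rule cinner_diff_right)
  also have "... = 0" using assms[of "a - b"] by (simp only: diff_self)
  finally have "cinner (a - b) (a - b) = 0" .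
  then have "a - b = 0" by (simp only: cinner_eq_zero_iff)
  then show ?thesis by (simp only: right_minus_eq)
qed

lemma adjoint_unique:
  assumes "\<And>x y. cinner (T x) y = cinner x (S y)"
  shows "cadjoint T = (S :: 'a::complex_inner \<Rightarrow> 'a)"
proof -
  have ex: "\<exists>S. \<forall>x y. cinner (T x) y = cinner x (S y)" using assms by blast
  have h: "\<forall>x y. cinner (T x) y = cinner x (cadjoint T y)"
    unfolding cadjoint_def by (rule someI_ex[OF ex])
  show ?thesis
  proof
    fix y show "cadjoint T y = S y"
    proof (rule cinner_ext)
      fix x show "cinner x (cadjoint T y) = cinner x (S y)" using h assms by simp
    qed
  qed
qed

lemma bounded_linear_cinner_right: "bounded_linear (\<lambda>x. cinner v (x::'a::complex_inner))"
proof (rule bounded_linear_intro[where K = "norm v"])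
  fix x y show "cinner v (x + y) = cinner v x + cinner v y" by (rule cinner_add_right)
next
  fix r x show "cinner v (r *\<^sub>R x) = r *\<^sub>R cinner v x"
    by (simp add: cinner_scaleR_right scaleR_conv_of_real)
next
  fix x show "norm (cinner v x) \<le> norm x * norm v"
    using cauchy_schwarz[of v x] by (simp add: mult.commute)
qed

lemma continuous_cinner_right: "continuous_on UNIV (\<lambda>x. cinner v (x::'a::complex_inner))"
  using bounded_linear_cinner_right linear_continuous_on by blast

definition csubspace :: "'a::complex_vector set \<Rightarrow> bool" where
  "csubspace M \<longleftrightarrow> 0 \<in> M \<and> (\<forall>x\<in>M. \<forall>y\<in>M. x + y \<in> M) \<and> (\<forall>c. \<forall>x\<in>M. c *\<^sub>C x \<in> M)"

lemma csubspace_add: "csubspace M \<Longrightarrow> x \<in> M \<Longrightarrow> y \<in> M \<Longrightarrow> x + y \<in> M"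
  unfolding csubspace_def by blast
lemma csubspace_scaleC: "csubspace M \<Longrightarrow> x \<in> M \<Longrightarrow> c *\<^sub>C x \<in> M"
  unfolding csubspace_def by blast
lemma csubspace_0: "csubspace M \<Longrightarrow> 0 \<in> M"
  unfolding csubspace_def by blast
lemma csubspace_scaleR: "csubspace M \<Longrightarrow> x \<in> M \<Longrightarrow> r *\<^sub>R x \<in> M"
  unfolding scaleR_scaleC by (rule csubspace_scaleC)
lemma csubspace_diff: "csubspace M \<Longrightarrow> x \<in> M \<Longrightarrow> y \<in> M \<Longrightarrow> x - y \<in> M"
  using csubspace_add[of M x "(-1) *\<^sub>C y"] csubspace_scaleC[of M y "-1"]
  by (simp add: scaleC_minus1)

lemma parallelogram:
  "(norm (a + b))^2 + (norm (a - b))^2 = 2 * (norm a)^2 + 2 * (norm (b::'a::complex_inner))^2"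
proof -
  have "cinner (a + b) (a + b) + cinner (a - b) (a - b) = 2 * cinner a a + 2 * cinner b b"
    by (simp add: cinner_add_left cinner_add_right cinner_diff_left cinner_diff_right algebra_simps)
  then have "complex_of_real ((norm (a + b))^2 + (norm (a - b))^2) =
      complex_of_real (2 * (norm a)^2 + 2 * (norm b)^2)"
    by (simp only: cinner_self_real of_real_add of_real_mult of_real_numeral)
  then show ?thesis by (simp only: of_real_eq_iff)
qed

lemma norm_sq_expand:
  fixes w z :: "'a::complex_inner"
  shows "(norm (w - (complex_of_real s * cinner z w) *\<^sub>C z))^2 =
    (norm w)^2 - 2 * s * (cmod (cinner z w))^2 + s^2 * (cmod (cinner z w))^2 * (norm z)^2"
proof -
  define c where "c = cinner z w"
  have wz: "cinner w z = cnj c" unfolding c_def by (rule cinner_conj)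
  have cc: "cnj c * c = complex_of_real ((cmod c)^2)"
    by (metis complex_norm_square mult.commute)
  have cc': "c * cnj c = complex_of_real ((cmod c)^2)"
    by (metis complex_norm_square)
  have "cinner (w - (complex_of_real s * c) *\<^sub>C z) (w - (complex_of_real s * c) *\<^sub>C z) =
     cinner w w - complex_of_real s * (c * cinner w z) - complex_of_real s * (cnj c * cinner z w)
     + complex_of_real s * complex_of_real s * (cnj c * c) * cinner z z"
    by (simp add: cinner_diff_left cinner_diff_right cinner_scaleC_left cinner_scaleC_right algebra_simps)
  also have "... = complex_of_real ((norm w)^2 - 2 * s * (cmod c)^2 + s^2 * (cmod c)^2 * (norm z)^2)"
    unfolding wz cc cc' c_def[symmetric] cinner_self_real
    by (simp add: algebra_simps power2_eq_square)
  finally show ?thesis unfolding c_def[symmetric]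
    by (simp only: cinner_self_real of_real_eq_iff)
qed


lemma proj_exists:
  fixes M :: "'a::chilbert_space set"
  assumes sub: "csubspace M" and cl: "closed M"
  shows "\<exists>y\<in>M. \<forall>z\<in>M. cinner z (x - y) = 0"
proof -
  define F where "F = (\<lambda>m. (norm (x - m))^2) ` M"
  define d where "d = Inf F"
  have Fne: "F \<noteq> {}" using csubspace_0[OF sub] unfolding F_def by blast
  have Fbdd: "bdd_below F" unfolding F_def by (rule bdd_belowI[where m = 0]) auto
  have dle: "d \<le> (norm (x - m))^2" if "m \<in> M" for m
    unfolding d_def F_def using that Fbdd[unfolded F_def] by (simp add: cInf_lower)
  have "\<exists>m\<in>M. (norm (x - m))^2 < d + 1 / real (Suc k)" for k
  proof -
    have "Inf F < d + 1 / real (Suc k)" unfolding d_def by simp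
    then obtain f where "f \<in> F" "f < d + 1 / real (Suc k)"
      using cInf_lessD[OF Fne] by blast
    then show ?thesis unfolding F_def by blast
  qed
  then obtain m where mM: "\<And>k. m k \<in> M" and mlt: "\<And>k. (norm (x - m k))^2 < d + 1 / real (Suc k)"
    by metis
  have dist_sq: "(norm (m j - m k))^2 \<le> 2 / real (Suc j) + 2 / real (Suc k)" for j k
  proof -
    define a where "a = x - m j"
    define b where "b = x - m k"
    define mid where "mid = (1/2) *\<^sub>R (m j + m k)"
    have midM: "mid \<in> M" unfolding mid_def
      by (intro csubspace_scaleR[OF sub] csubspace_add[OF sub] mM)
    have "a + b = 2 *\<^sub>R (x - mid)" unfolding a_def b_def mid_def
      by (simp add: algebra_simps scaleR_2)
    then have "(norm (a + b))^2 = 4 * (norm (x - mid))^2"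
      by (simp add: power2_eq_square)
    moreover have "d \<le> (norm (x - mid))^2" using dle midM by blast
    moreover have "(norm (a - b))^2 = (norm (m j - m k))^2" unfolding a_def b_def
      by (simp add: norm_minus_commute)
    moreover note parallelogram[of a b]
    moreover have "2 / real (Suc j) = 2 * (1 / real (Suc j))" "2 / real (Suc k) = 2 * (1 / real (Suc k))"
      by simp_all
    moreover have "(norm a)^2 < d + 1 / real (Suc j)" "(norm b)^2 < d + 1 / real (Suc k)"
      unfolding a_def b_def using mlt by auto
    ultimately show ?thesis by linarith
  qed
  have "Cauchy m"
  proof (rule metric_CauchyI)
    fix e :: real assume e: "e > 0"
    then have "e^2 / 4 > 0" by simp
    then obtain N where N: "inverse (real (Suc N)) < e^2 / 4"
      using reals_Archimedean by blast
    show "\<exists>M. \<forall>j\<ge>M. \<forall>k\<ge>M. dist (m j) (m k) < e"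
    proof (intro exI allI impI)
      fix j k assume jk: "N \<le> j" "N \<le> k"
      have "1 / real (Suc j) \<le> 1 / real (Suc N)" using jk
        by (simp add: frac_le)
      moreover have "1 / real (Suc k) \<le> 1 / real (Suc N)" using jk
        by (simp add: frac_le)
      ultimately have "(norm (m j - m k))^2 < e^2"
        using dist_sq[of j k] N by (simp add: inverse_eq_divide)
      then have "norm (m j - m k) < e" using e
        by (simp add: power_less_imp_less_base)
      then show "dist (m j) (m k) < e" by (simp add: dist_norm)
    qed
  qed
  then obtain y where lim: "m \<longlonglongrightarrow> y" using Cauchy_convergent_iff convergent_def by blast
  have yM: "y \<in> M" using closed_sequentially[OF cl mM lim] .
  have lim2: "(\<lambda>k. (norm (x - m k))^2) \<longlonglongrightarrow> (norm (x - y))^2"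
    by (intro tendsto_intros lim)
  have lim3: "(\<lambda>k. d + 1 / real (Suc k)) \<longlonglongrightarrow> d"
    using LIMSEQ_inverse_real_of_nat_add[of d] by (simp add: inverse_eq_divide)
  have yd: "(norm (x - y))^2 \<le> d"
    by (rule LIMSEQ_le[OF lim2 lim3]) (meson less_imp_le mlt)
  have ymin: "(norm (x - y))^2 \<le> (norm (x - m'))^2" if "m' \<in> M" for m'
    using yd dle[OF that] by linarith
  show ?thesis
  proof (intro bexI[OF _ yM] ballI)
    fix z assume zM: "z \<in> M"
    define w where "w = x - y"
    define c where "c = cinner z w"
    define s where "s = 1 / ((norm z)^2 + 1)"
    have nz: "(norm z)^2 + 1 > 0" using zero_le_power2[of "norm z"] by linarith
    have s0: "s > 0" unfolding s_def using nz by simp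
    have s1: "s * (norm z)^2 < 1" unfolding s_def using nz by (simp add: field_simps)
    have "y + (complex_of_real s * c) *\<^sub>C z \<in> M"
      by (intro csubspace_add[OF sub] yM csubspace_scaleC[OF sub] zM)
    then have "(norm w)^2 \<le> (norm (w - (complex_of_real s * c) *\<^sub>C z))^2"
      using ymin unfolding w_def by (simp add: algebra_simps)
    also have "... = (norm w)^2 - 2 * s * (cmod c)^2 + s^2 * (cmod c)^2 * (norm z)^2"
      unfolding c_def by (rule norm_sq_expand)
    finally have "0 \<le> s * (cmod c)^2 * (s * (norm z)^2 - 2)"
      by (simp add: algebra_simps power2_eq_square)
    moreover have "s * (norm z)^2 - 2 < 0" using s1 by simp
    ultimately have "s * (cmod c)^2 \<le> 0"
      using zero_le_mult_iff[of "s * (cmod c)^2" "s * (norm z)^2 - 2"] by linarith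
    then have "(cmod c)^2 \<le> 0" using mult_le_0_iff[of s "(cmod c)^2"] s0 by linarith
    then have "c = 0" by simp
    then show "cinner z (x - y) = 0" unfolding c_def w_def .
  qed
qed


definition proj :: "'a::complex_inner set \<Rightarrow> 'a \<Rightarrow> 'a" where
  "proj M x = (SOME y. y \<in> M \<and> (\<forall>z\<in>M. cinner z (x - y) = 0))"

context
  fixes M :: "'a::chilbert_space set"
  assumes sub: "csubspace M" and cl: "closed M"
begin

lemma proj_prop: "proj M x \<in> M \<and> (\<forall>z\<in>M. cinner z (x - proj M x) = 0)"
proof -
  have "\<exists>y. y \<in> M \<and> (\<forall>z\<in>M. cinner z (x - y) = 0)" using proj_exists[OF sub cl, of x] by blast
  then show ?thesis unfolding proj_def by (rule someI_ex)
qed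

lemma proj_in: "proj M x \<in> M" using proj_prop by blast
lemma proj_orth: "z \<in> M \<Longrightarrow> cinner z (x - proj M x) = 0" using proj_prop by blast

lemma proj_unique:
  assumes yM: "y \<in> M" and orth: "\<And>z. z \<in> M \<Longrightarrow> cinner z (x - y) = 0"
  shows "proj M x = y"
proof -
  define p where "p = proj M x"
  have pyM: "p - y \<in> M" unfolding p_def by (rule csubspace_diff[OF sub proj_in yM])
  have "cinner (p - y) (p - y) = cinner (p - y) ((x - y) - (x - p))" by simp
  also have "... = cinner (p - y) (x - y) - cinner (p - y) (x - p)" by (rule cinner_diff_right)
  also have "... = 0" using orth[OF pyM] proj_orth[OF pyM, of x] unfolding p_def by simp
  finally have "p - y = 0" using cinner_eq_zero_iff by blast
  then show ?thesis unfolding p_def by simp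
qed

lemma proj_id: "x \<in> M \<Longrightarrow> proj M x = x"
  by (rule proj_unique) simp_all

lemma proj_zero: "(\<And>z. z \<in> M \<Longrightarrow> cinner z x = 0) \<Longrightarrow> proj M x = 0"
  by (rule proj_unique) (simp_all add: csubspace_0[OF sub])

lemma proj_add: "proj M (x + y) = proj M x + proj M y"
proof (rule proj_unique)
  show "proj M x + proj M y \<in> M" by (rule csubspace_add[OF sub proj_in proj_in])
  fix z assume z: "z \<in> M"
  have e: "x + y - (proj M x + proj M y) = (x - proj M x) + (y - proj M y)" by simp
  show "cinner z (x + y - (proj M x + proj M y)) = 0"
    unfolding e cinner_add_right proj_orth[OF z] by simp
qed

lemma proj_scaleC: "proj M (c *\<^sub>C x) = c *\<^sub>C proj M x"
proof (rule proj_unique)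
  show "c *\<^sub>C proj M x \<in> M" by (rule csubspace_scaleC[OF sub proj_in])
  fix z assume z: "z \<in> M"
  have "c *\<^sub>C x - c *\<^sub>C proj M x = c *\<^sub>C (x - proj M x)" by (simp add: scaleC_diff_right)
  then show "cinner z (c *\<^sub>C x - c *\<^sub>C proj M x) = 0"
    using proj_orth[OF z, of x] by (simp add: cinner_scaleC_right)
qed

lemma proj_scaleR: "proj M (r *\<^sub>R x) = r *\<^sub>R proj M x"
  unfolding scaleR_scaleC by (rule proj_scaleC)

lemma proj_norm: "norm (proj M x) \<le> norm x"
proof -
  have "cinner (proj M x) (x - proj M x) = 0" by (rule proj_orth[OF proj_in])
  then have "(norm (proj M x + (x - proj M x)))^2 = (norm (proj M x))^2 + (norm (x - proj M x))^2"
    by (rule pyth)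
  then have "(norm (proj M x))^2 \<le> (norm x)^2" by simp
  then show ?thesis using power2_le_imp_le norm_ge_zero by blast
qed

lemma proj_bounded_linear: "bounded_linear (proj M)"
  by (rule bounded_linear_intro[where K = 1]) (simp_all add: proj_add proj_scaleR proj_norm)

lemma proj_selfadj: "cinner (proj M x) y = cinner x (proj M y)"
proof -
  have "cinner (proj M x) y = cinner (proj M x) (proj M y + (y - proj M y))" by simp
  also have "... = cinner (proj M x) (proj M y)"
    unfolding cinner_add_right proj_orth[OF proj_in] by simp
  finally have 1: "cinner (proj M x) y = cinner (proj M x) (proj M y)" .
  have "cinner x (proj M y) = cinner (proj M x + (x - proj M x)) (proj M y)" by simp
  also have "... = cinner (proj M x) (proj M y) + cinner (x - proj M x) (proj M y)"
    by (rule cinner_add_left)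
  also have "cinner (x - proj M x) (proj M y) = cnj (cinner (proj M y) (x - proj M x))"
    by (rule cinner_conj)
  also have "... = 0" using proj_orth[OF proj_in, of y x] by simp
  finally show ?thesis using 1 by simp
qed

end

lemma riesz:
  fixes f :: "'a::chilbert_space \<Rightarrow> complex"
  assumes bl: "bounded_linear f" and cl: "\<And>c x. f (c *\<^sub>C x) = c * f x"
  shows "\<exists>z. \<forall>x. f x = cinner z x"
proof (cases "\<forall>x. f x = 0")
  case True then show ?thesis by (intro exI[of _ 0]) simp
next
  case False
  then obtain x0 where x0: "f x0 \<noteq> 0" by blast
  define K where "K = {x. f x = 0}"
  interpret f: bounded_linear f by (rule bl)
  have subK: "csubspace K" unfolding K_def csubspace_def
    by (simp add: f.add cl)
  have clK: "closed K" unfolding K_def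
    by (rule closed_Collect_eq) (simp_all add: f.continuous_on continuous_on_id continuous_on_const)
  obtain y where yK: "y \<in> K" and orth: "\<And>z. z \<in> K \<Longrightarrow> cinner z (x0 - y) = 0"
    using proj_exists[OF subK clK, of x0] by blast
  define w where "w = x0 - y"
  have fw: "f w = f x0" using yK unfolding w_def K_def by (simp add: f.diff)
  have w0: "w \<noteq> 0" using fw x0 by auto
  have ww: "cinner w w \<noteq> 0" using w0 cinner_eq_zero_iff by blast
  show ?thesis
  proof (intro exI allI)
    fix x
    define k where "k = x - (f x / f w) *\<^sub>C w"
    have "f k = 0" unfolding k_def using fw x0 by (simp add: f.diff cl)
    then have "cinner k w = 0" using orth unfolding K_def w_def by simp
    then have "cinner w k = 0" using cinner_conj[of w k] by simp
    then have "cinner w x = (f x / f w) * cinner w w"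
      unfolding k_def by (simp add: cinner_diff_right cinner_scaleC_right)
    then have "f x = (f w / cinner w w) * cinner w x"
      using ww fw x0 by (simp add: field_simps)
    also have "... = cinner (cnj (f w / cinner w w) *\<^sub>C w) x"
      by (simp add: cinner_scaleC_left)
    finally show "f x = cinner (cnj (f w / cinner w w) *\<^sub>C w) x" .
  qed
qed

lemma adjoint_exists:
  fixes T :: "'a::chilbert_space \<Rightarrow> 'a"
  assumes "bounded_clinear_op T"
  shows "\<exists>S. \<forall>x y. cinner (T x) y = cinner x (S y)"
proof -
  have blT: "bounded_linear T" and clT: "\<And>a x. T (a *\<^sub>C x) = a *\<^sub>C T x"
    using assms unfolding bounded_clinear_op_def by auto
  have "\<exists>z. \<forall>x. cinner (T x) y = cinner x z" for y
  proof -
    have "bounded_linear (\<lambda>x. cinner y (T x))"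
      using bounded_linear_compose[OF bounded_linear_cinner_right blT] by simp
    moreover have "\<And>c x. cinner y (T (c *\<^sub>C x)) = c * cinner y (T x)"
      by (simp add: clT cinner_scaleC_right)
    ultimately obtain z where z: "\<And>x. cinner y (T x) = cinner z x"
      using riesz[of "\<lambda>x. cinner y (T x)"] by blast
    show ?thesis
    proof (intro exI allI)
      fix x
      have "cinner (T x) y = cnj (cinner y (T x))" by (rule cinner_conj)
      also have "... = cnj (cinner z x)" by (simp add: z)
      also have "... = cinner x z" using cinner_conj[of x z] by simp
      finally show "cinner (T x) y = cinner x z" .
    qed
  qed
  then show ?thesis by metis
qed

lemma adjoint_prop:
  fixes T :: "'a::chilbert_space \<Rightarrow> 'a"
  assumes "bounded_clinear_op T"
  shows "cinner (T x) y = cinner x (cadjoint T y)"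
proof -
  have "\<forall>x y. cinner (T x) y = cinner x (cadjoint T y)"
    unfolding cadjoint_def by (rule someI_ex[OF adjoint_exists[OF assms]])
  then show ?thesis by blast
qed

lemma adjoint_prop2:
  fixes T :: "'a::chilbert_space \<Rightarrow> 'a"
  assumes "bounded_clinear_op T"
  shows "cinner y (T x) = cinner (cadjoint T y) x"
proof -
  have "cinner y (T x) = cnj (cinner (T x) y)" by (rule cinner_conj)
  also have "... = cnj (cinner x (cadjoint T y))" by (simp add: adjoint_prop[OF assms])
  also have "... = cinner (cadjoint T y) x" using cinner_conj[of "cadjoint T y" x] by simp
  finally show ?thesis .
qed


lemma cinner_scaleR_left: "cinner (r *\<^sub>R x) y = complex_of_real r * cinner x (y::'a::complex_inner)"
  by (simp add: scaleR_scaleC cinner_scaleC_left)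

lemma comm_pow: assumes "\<And>x. f (g x) = g (f x)" shows "(f ^^ j) (g x) = g ((f ^^ j) x)"
  by (induction j) (simp_all add: assms)

lemma comm_pow2: assumes "\<And>x. f (g x) = g (f x)" shows "(f ^^ j) ((g ^^ k) x) = (g ^^ k) ((f ^^ j) x)"
proof -
  have h: "\<And>x. (f ^^ j) (g x) = g ((f ^^ j) x)" using assms by (rule comm_pow)
  show ?thesis by (induction k) (simp_all add: h)
qed

lemma adjoint_pow:
  fixes Q :: "'a::complex_inner \<Rightarrow> 'a"
  assumes "\<And>x y. cinner (Q x) y = cinner x (S y)"
  shows "cinner ((Q ^^ k) x) y = cinner x ((S ^^ k) y)"
proof (induction k arbitrary: y)
  case 0 then show ?case by simp
next
  case (Suc k)
  have "cinner ((Q ^^ Suc k) x) y = cinner (Q ((Q ^^ k) x)) y" by simp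
  also have "... = cinner ((Q ^^ k) x) (S y)" by (rule assms)
  also have "... = cinner x ((S ^^ k) (S y))" by (rule Suc)
  also have "... = cinner x ((S ^^ Suc k) y)" by (simp add: funpow_swap1)
  finally show ?case .
qed


definition Aop :: "('a::complex_inner \<Rightarrow> 'a) \<Rightarrow> 'a \<Rightarrow> 'a" where
  "Aop Q x = cadjoint Q (Q x)"

locale qnop =
  fixes Q :: "'a::chilbert_space \<Rightarrow> 'a"
  assumes bQ: "bounded_clinear_op Q" and qQ: "quasinormal_op Q"
begin

lemma linQ: "bounded_linear Q" using bQ unfolding bounded_clinear_op_def by simp

lemma adj: "cinner (Q x) y = cinner x (cadjoint Q y)" by (rule adjoint_prop[OF bQ])
lemma adj2: "cinner y (Q x) = cinner (cadjoint Q y) x" by (rule adjoint_prop2[OF bQ])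

lemma qn: "Q (Aop Q x) = Aop Q (Q x)"
  using fun_cong[OF qQ[unfolded quasinormal_op_def], of x] unfolding Aop_def by simp

lemma Aself: "cinner (Aop Q x) y = cinner x (Aop Q y)"
proof -
  have "cinner (Aop Q x) y = cinner (Q x) (Q y)" unfolding Aop_def by (rule adj2[symmetric])
  also have "... = cinner x (Aop Q y)" unfolding Aop_def by (rule adj)
  finally show ?thesis .
qed

lemma Qs_zero: "cadjoint Q 0 = 0"
proof -
  have "cinner (cadjoint Q 0) (cadjoint Q 0) = cinner 0 (Q (cadjoint Q 0))" by (rule adj2[symmetric])
  then show ?thesis using cinner_eq_zero_iff by auto
qed

lemma Qs_scaleR: "cadjoint Q (r *\<^sub>R v) = r *\<^sub>R cadjoint Q v"
proof (rule cinner_ext)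
  fix x
  have "cinner x (cadjoint Q (r *\<^sub>R v)) = cinner (Q x) (r *\<^sub>R v)" by (simp add: adj)
  also have "... = complex_of_real r * cinner (Q x) v" by (rule cinner_scaleR_right)
  also have "... = cinner x (r *\<^sub>R cadjoint Q v)" by (simp add: adj cinner_scaleR_right)
  finally show "cinner x (cadjoint Q (r *\<^sub>R v)) = cinner x (r *\<^sub>R cadjoint Q v)" .
qed

lemma DA: assumes "cadjoint Q e = 0" shows "cadjoint Q (Aop Q e) = 0"
proof -
  define v where "v = cadjoint Q (Aop Q e)"
  have "cinner v v = cinner (Aop Q e) (Q v)" unfolding v_def by (rule adj2[symmetric])
  also have "... = cinner e (Aop Q (Q v))" by (rule Aself)
  also have "... = cinner e (Q (Aop Q v))" by (simp add: qn)
  also have "... = cinner (cadjoint Q e) (Aop Q v)" by (rule adj2)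
  also have "... = 0" using assms by simp
  finally show ?thesis unfolding v_def using cinner_eq_zero_iff by blast
qed

lemma DAk: assumes "cadjoint Q e = 0" shows "cadjoint Q ((Aop Q ^^ k) e) = 0"
  by (induction k) (simp_all add: assms DA)

lemma QsQ: "cadjoint Q (Q ((Q ^^ j) y)) = (Q ^^ j) (Aop Q y)"
proof -
  have "cadjoint Q (Q ((Q ^^ j) y)) = Aop Q ((Q ^^ j) y)" by (simp add: Aop_def)
  also have "... = (Q ^^ j) (Aop Q y)" using comm_pow[of Q "Aop Q" j y] qn by simp
  finally show ?thesis .
qed

lemma L:
  assumes e: "cadjoint Q e = 0"
  shows "cinner ((Q ^^ m) e) ((Q ^^ k) x) =
    (if k \<le> m then cinner ((Q ^^ (m - k)) ((Aop Q ^^ k) e)) x else 0)"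
proof (induction k arbitrary: x)
  case 0 show ?case by simp
next
  case (Suc k)
  have "cinner ((Q ^^ m) e) ((Q ^^ Suc k) x) = cinner ((Q ^^ m) e) ((Q ^^ k) (Q x))"
    by (simp add: funpow_swap1)
  also have "... = (if k \<le> m then cinner ((Q ^^ (m - k)) ((Aop Q ^^ k) e)) (Q x) else 0)"
    by (rule Suc)
  also have "... = (if Suc k \<le> m then cinner ((Q ^^ (m - Suc k)) ((Aop Q ^^ Suc k) e)) x else 0)"
  proof (cases "k < m")
    case True
    define j where "j = m - Suc k"
    have j: "m - k = Suc j" using True unfolding j_def by simp
    have "cinner ((Q ^^ (m - k)) ((Aop Q ^^ k) e)) (Q x) =
        cinner (cadjoint Q ((Q ^^ (m - k)) ((Aop Q ^^ k) e))) x" by (rule adj2)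
    also have "(Q ^^ (m - k)) ((Aop Q ^^ k) e) = Q ((Q ^^ j) ((Aop Q ^^ k) e))"
      unfolding j by simp
    also have "cadjoint Q (Q ((Q ^^ j) ((Aop Q ^^ k) e))) = (Q ^^ j) (Aop Q ((Aop Q ^^ k) e))"
      by (rule QsQ)
    also have "Aop Q ((Aop Q ^^ k) e) = (Aop Q ^^ Suc k) e" by simp
    finally show ?thesis using True j unfolding j_def by simp
  next
    case False
    show ?thesis
    proof (cases "k = m")
      case True
      have "cinner ((Aop Q ^^ k) e) (Q x) = cinner (cadjoint Q ((Aop Q ^^ k) e)) x" by (rule adj2)
      also have "... = 0" using DAk[OF e] by simp
      finally show ?thesis using True by simp
    next
      case False2: False
      then show ?thesis using False by simp
    qed
  qed
  finally show ?case .
qed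

lemma DN:
  assumes "cadjoint Q d = 0" "m \<ge> 1"
  shows "cinner ((Q ^^ m) e) d = 0"
proof -
  obtain j where j: "m = Suc j" using assms(2) by (cases m) auto
  have "cinner ((Q ^^ m) e) d = cinner (Q ((Q ^^ j) e)) d" unfolding j by simp
  also have "... = cinner ((Q ^^ j) e) (cadjoint Q d)" by (rule adj)
  finally show ?thesis using assms(1) by simp
qed

lemma normal_crit:
  assumes "\<And>d. cadjoint Q d = 0 \<Longrightarrow> Q d = 0"
  shows "normal_op Q"
proof -
  define B where "B = (\<lambda>x. Q (cadjoint Q x) - Aop Q x)"
  have Bself: "cinner (B x) y = cinner x (B y)" for x y
  proof -
    have "cinner (Q (cadjoint Q x)) y = cinner (cadjoint Q x) (cadjoint Q y)" by (rule adj)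
    also have "... = cinner x (Q (cadjoint Q y))" by (rule adj2[symmetric])
    finally have "cinner (Q (cadjoint Q x)) y = cinner x (Q (cadjoint Q y))" .
    then show ?thesis unfolding B_def by (simp add: cinner_diff_left cinner_diff_right Aself)
  qed
  have BQ: "B (Q z) = 0" for z
  proof -
    have "Q (cadjoint Q (Q z)) = Q (Aop Q z)" unfolding Aop_def by simp
    also have "... = Aop Q (Q z)" by (rule qn)
    finally show ?thesis unfolding B_def by simp
  qed
  have eq: "Q (cadjoint Q x) = cadjoint Q (Q x)" for x
  proof -
    define v where "v = cadjoint Q (B x)"
    have "cinner v v = cinner (B x) (Q v)" unfolding v_def by (rule adj2[symmetric])
    also have "... = cinner x (B (Q v))" by (rule Bself)
    also have "... = 0" by (simp add: BQ)
    finally have "v = 0" using cinner_eq_zero_iff by blast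
    then have QB: "Q (B x) = 0" using assms unfolding v_def by blast
    have "B (B x) = Q (cadjoint Q (B x)) - cadjoint Q (Q (B x))"
      by (simp only: B_def Aop_def)
    also have "... = 0" using \<open>v = 0\<close> QB Qs_zero linear_0[OF bounded_linear.linear[OF linQ]]
      unfolding v_def by simp
    finally have "B (B x) = 0" .
    then have "cinner (B x) (B x) = 0" using Bself[of x "B x"] by simp
    then have "B x = 0" using cinner_eq_zero_iff by blast
    then show ?thesis unfolding B_def Aop_def by simp
  qed
  show ?thesis unfolding normal_op_def using eq by auto
qed

end


theorem theorem6p3:
  fixes T :: "'a::chilbert_space \<Rightarrow> 'a" and n :: nat
  assumes "bounded_clinear_op T"
    and "quasinormal_op T"
    and "\<not> normal_op T"
    and "n > 1"
    and "\<exists>Q. bounded_clinear_op Q \<and> quasinormal_op Q \<and> Q ^^ n = T"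
  shows "\<exists>R. bounded_clinear_op R \<and> \<not> quasinormal_op R \<and> R ^^ n = T"
proof -
  obtain Q where bQ: "bounded_clinear_op Q" and qQ: "quasinormal_op Q" and QT: "Q ^^ n = T"
    using assms(5) by blast
  interpret qnop Q using bQ qQ by unfold_locales
  interpret Ql: bounded_linear Q by (rule linQ)
  have bT: "bounded_clinear_op T" by (rule assms(1))
  interpret Tl: bounded_linear T using bT unfolding bounded_clinear_op_def by simp
  have n1: "n > 1" by (rule assms(4))
  define Qs where "Qs = cadjoint Q"
  define N where "N = {x. \<forall>e. Qs e = 0 \<longrightarrow> (\<forall>m. \<not> n dvd m \<longrightarrow> cinner ((Q ^^ m) e) x = 0)}"
  have subN: "csubspace N" unfolding csubspace_def N_def
    by (simp add: cinner_add_right cinner_scaleC_right)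
  have "N = (\<Inter>e\<in>{e. Qs e = 0}. \<Inter>m\<in>{m. \<not> n dvd m}. {x. cinner ((Q ^^ m) e) x = 0})"
    unfolding N_def by auto
  moreover have "closed (\<Inter>e\<in>{e. Qs e = 0}. \<Inter>m\<in>{m. \<not> n dvd m}. {x. cinner ((Q ^^ m) e) x = 0})"
    by (intro closed_INT ballI closed_Collect_eq continuous_cinner_right continuous_on_const)
  ultimately have clN: "closed N" by simp
  have TN: "T x \<in> N" if x: "x \<in> N" for x
    unfolding N_def
  proof (intro CollectI allI impI)
    fix e m assume e: "Qs e = 0" and m: "\<not> n dvd m"
    have "cinner ((Q ^^ m) e) (T x) = cinner ((Q ^^ m) e) ((Q ^^ n) x)" using QT by simp
    also have "... = (if n \<le> m then cinner ((Q ^^ (m - n)) ((Aop Q ^^ n) e)) x else 0)"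
      using L e unfolding Qs_def by blast
    also have "... = 0"
    proof (cases "n \<le> m")
      case True
      have "\<not> n dvd (m - n)" using m True by (metis dvd_diff_nat dvd_refl le_add_diff_inverse2 dvd_add)
      moreover have "Qs ((Aop Q ^^ n) e) = 0" using DAk e unfolding Qs_def by blast
      ultimately show ?thesis using x True unfolding N_def by auto
    qed simp
    finally show "cinner ((Q ^^ m) e) (T x) = 0" .
  qed
  have TsN: "cadjoint T x \<in> N" if x: "x \<in> N" for x
    unfolding N_def
  proof (intro CollectI allI impI)
    fix e m assume e: "Qs e = 0" and m: "\<not> n dvd m"
    have "cinner ((Q ^^ m) e) (cadjoint T x) = cinner (T ((Q ^^ m) e)) x"
      by (rule adjoint_prop[OF bT, symmetric])
    also have "T ((Q ^^ m) e) = (Q ^^ (n + m)) e" using QT by (simp add: funpow_add)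
    also have "\<not> n dvd (n + m)" using m by simp
    then have "cinner ((Q ^^ (n + m)) e) x = 0" using x e unfolding N_def by blast
    finally show "cinner ((Q ^^ m) e) (cadjoint T x) = 0" .
  qed
  define P where "P = proj N"
  have Pin: "P x \<in> N" for x unfolding P_def by (rule proj_in[OF subN clN])
  have Porth: "z \<in> N \<Longrightarrow> cinner z (x - P x) = 0" for z x unfolding P_def by (rule proj_orth[OF subN clN])
  have Pid: "x \<in> N \<Longrightarrow> P x = x" for x unfolding P_def by (rule proj_id[OF subN clN])
  have Pzero: "(\<And>z. z \<in> N \<Longrightarrow> cinner z x = 0) \<Longrightarrow> P x = 0" for x
    unfolding P_def by (rule proj_zero[OF subN clN])
  have Padd: "P (x + y) = P x + P y" for x y unfolding P_def by (rule proj_add[OF subN clN])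
  have PscaleC: "P (c *\<^sub>C x) = c *\<^sub>C P x" for c x unfolding P_def by (rule proj_scaleC[OF subN clN])
  have PscaleR: "P (r *\<^sub>R x) = r *\<^sub>R P x" for r x unfolding P_def by (rule proj_scaleR[OF subN clN])
  have Pbl: "bounded_linear P" unfolding P_def by (rule proj_bounded_linear[OF subN clN])
  have Pself: "cinner (P x) y = cinner x (P y)" for x y unfolding P_def by (rule proj_selfadj[OF subN clN])
  have PP: "P (P x) = P x" for x by (rule Pid[OF Pin])
  have PT: "P (T x) = T (P x)" for x
  proof -
    have "proj N (T x) = T (P x)"
    proof (rule proj_unique[OF subN clN])
      show "T (P x) \<in> N" by (rule TN[OF Pin])
      fix z assume z: "z \<in> N"
      have "cinner z (T x - T (P x)) = cinner z (T (x - P x))" by (simp add: Tl.diff)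
      also have "... = cinner (cadjoint T z) (x - P x)" by (rule adjoint_prop2[OF bT])
      also have "... = 0" by (rule Porth[OF TsN[OF z]])
      finally show "cinner z (T x - T (P x)) = 0" .
    qed
    then show ?thesis unfolding P_def .
  qed
  interpret Pl: bounded_linear P by (rule Pbl)
  have half: "v - (1/2) *\<^sub>R v = (1/2) *\<^sub>R v" for v :: 'a
  proof -
    have e: "(1/2::real) *\<^sub>R v + (1/2) *\<^sub>R v = v" by (simp flip: scaleR_add_left)
    show ?thesis by (metis e add_diff_cancel_right')
  qed
  define W where "W = (\<lambda>x. x + P x)"
  define Wi where "Wi = (\<lambda>x. x - (1/2) *\<^sub>R P x)"
  have WWi: "W (Wi x) = x" for x
  proof -
    have "W (Wi x) = x + (P x - ((1/2) *\<^sub>R P x + (1/2) *\<^sub>R P x))"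
      unfolding W_def Wi_def by (simp add: Pl.diff PscaleR PP algebra_simps)
    also have "... = x" by (simp flip: scaleR_add_left)
    finally show ?thesis .
  qed
  have WiW: "Wi (W x) = x" for x
  proof -
    have "Wi (W x) = x + (P x - ((1/2) *\<^sub>R P x + (1/2) *\<^sub>R P x))"
      unfolding W_def Wi_def by (simp add: Pl.add PscaleR PP algebra_simps)
    also have "... = x" by (simp flip: scaleR_add_left)
    finally show ?thesis .
  qed
  have WT: "W (T x) = T (W x)" for x unfolding W_def by (simp add: PT Tl.add)
  have W0: "P v = 0 \<Longrightarrow> W v = v" for v unfolding W_def by simp
  have Wi0: "P v = 0 \<Longrightarrow> Wi v = v" for v unfolding Wi_def by simp
  have W1: "P v = v \<Longrightarrow> W v = 2 *\<^sub>R v" for v unfolding W_def by (simp add: scaleR_2)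
  have Wi1: "P v = v \<Longrightarrow> Wi v = (1/2) *\<^sub>R v" for v unfolding Wi_def by (simp add: half)
  define R where "R = W \<circ> Q \<circ> Wi"
  have Rpow: "(R ^^ Suc k) x = W ((Q ^^ Suc k) (Wi x))" for k x
  proof (induction k arbitrary: x)
    case 0 then show ?case by (simp add: R_def)
  next
    case (Suc k)
    have "(R ^^ Suc (Suc k)) x = R ((R ^^ Suc k) x)" by simp
    also have "... = R (W ((Q ^^ Suc k) (Wi x)))" by (simp only: Suc)
    also have "... = W (Q (Wi (W ((Q ^^ Suc k) (Wi x)))))" by (simp only: R_def comp_apply)
    also have "... = W ((Q ^^ Suc (Suc k)) (Wi x))" by (simp only: WiW funpow.simps comp_apply)
    finally show ?case .
  qed
  have RnT: "R ^^ n = T"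
  proof
    fix x
    have nS: "n = Suc (n - 1)" using n1 by simp
    have "(R ^^ n) x = W ((Q ^^ n) (Wi x))" by (subst (1 2) nS) (rule Rpow)
    also have "... = W (T (Wi x))" using QT by simp
    also have "... = T x" by (simp add: WT WWi)
    finally show "(R ^^ n) x = T x" .
  qed
  have scaleC_scaleR: "c *\<^sub>C (r *\<^sub>R v) = r *\<^sub>R (c *\<^sub>C v)" for c r and v :: 'a
    by (simp add: scaleR_scaleC scaleC_scaleC mult.commute)
  have clQ: "Q (c *\<^sub>C x) = c *\<^sub>C Q x" for c x using bQ unfolding bounded_clinear_op_def by blast
  have blW: "bounded_linear W" unfolding W_def by (rule bounded_linear_add[OF bounded_linear_ident Pbl])
  have blWi: "bounded_linear Wi" unfolding Wi_def
    by (rule bounded_linear_sub[OF bounded_linear_ident bounded_linear_compose[OF bounded_linear_scaleR_right Pbl]])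
  have Wc: "W (c *\<^sub>C x) = c *\<^sub>C W x" for c x
    by (simp only: W_def PscaleC scaleC_add_right)
  have Wic: "Wi (c *\<^sub>C x) = c *\<^sub>C Wi x" for c x
    by (simp only: Wi_def PscaleC scaleC_diff_right scaleC_scaleR)
  have bR: "bounded_clinear_op R"
    unfolding bounded_clinear_op_def
  proof (intro conjI allI)
    have "bounded_linear (\<lambda>x. W (Q (Wi x)))"
      by (rule bounded_linear_compose[OF blW bounded_linear_compose[OF linQ blWi]])
    then show "bounded_linear R" unfolding R_def comp_def .
  next
    fix c x
    show "R (c *\<^sub>C x) = c *\<^sub>C R x"
      by (simp only: R_def comp_apply Wic clQ Wc)
  qed
  have Wself: "cinner (W x) y = cinner x (W y)" for x y
    unfolding W_def by (simp add: cinner_add_left cinner_add_right Pself)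
  have Wiself: "cinner (Wi x) y = cinner x (Wi y)" for x y
    unfolding Wi_def by (simp add: cinner_diff_left cinner_diff_right cinner_scaleR_left cinner_scaleR_right Pself)
  have adjR: "cadjoint R = Wi \<circ> Qs \<circ> W"
  proof (rule adjoint_unique)
    fix x y
    have "cinner (R x) y = cinner (W (Q (Wi x))) y" by (simp add: R_def)
    also have "... = cinner (Q (Wi x)) (W y)" by (rule Wself)
    also have "... = cinner (Wi x) (Qs (W y))" unfolding Qs_def by (rule adj)
    also have "... = cinner x (Wi (Qs (W y)))" by (rule Wiself)
    finally show "cinner (R x) y = cinner x ((Wi \<circ> Qs \<circ> W) y)" by simp
  qed
  obtain d where dD: "Qs d = 0" and Qd: "Q d \<noteq> 0"
  proof -
    have "\<exists>d. Qs d = 0 \<and> Q d \<noteq> 0"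
    proof (rule ccontr)
      assume "\<not> (\<exists>d. Qs d = 0 \<and> Q d \<noteq> 0)"
      then have "normal_op Q" using normal_crit unfolding Qs_def by blast
      then have comm: "Qs (Q x) = Q (Qs x)" for x
        using fun_cong[of _ _ x] unfolding normal_op_def Qs_def by (metis comp_apply)
      have adjT: "cadjoint T = Qs ^^ n"
        unfolding QT[symmetric] by (rule adjoint_unique, rule adjoint_pow) (simp add: adj Qs_def)
      have "normal_op T" unfolding normal_op_def adjT
      proof
        fix x show "((Qs ^^ n) \<circ> T) x = (T \<circ> (Qs ^^ n)) x"
          unfolding QT[symmetric] comp_def by (rule comm_pow2) (rule comm)
      qed
      then show False using assms(3) by blast
    qed
    then show ?thesis using that by blast
  qed
  have memN: "(\<And>e m. Qs e = 0 \<Longrightarrow> \<not> n dvd m \<Longrightarrow> cinner ((Q ^^ m) e) v = 0) \<Longrightarrow> v \<in> N" for v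
    unfolding N_def by blast
  have m1: "\<not> n dvd m \<Longrightarrow> m \<ge> 1" for m by (cases m) auto
  have dN: "d \<in> N" by (rule memN) (rule DN[OF dD[unfolded Qs_def] m1])
  have AdD: "Qs (Aop Q d) = 0" using DA dD unfolding Qs_def by blast
  have AdN: "Aop Q d \<in> N" by (rule memN) (rule DN[OF AdD[unfolded Qs_def] m1])
  have orthQ: "P ((Q ^^ j) e) = 0" if e: "Qs e = 0" and j: "\<not> n dvd j" for e j
  proof (rule Pzero)
    fix z assume "z \<in> N"
    then have "cinner ((Q ^^ j) e) z = 0" using e j unfolding N_def by blast
    then show "cinner z ((Q ^^ j) e) = 0" using cinner_conj[of z "(Q ^^ j) e"] by simp
  qed
  have n_not1: "\<not> n dvd 1" using n1 by simp
  have Pu: "P (Q d) = 0" using orthQ[OF dD n_not1] by simp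
  have PQAd: "P (Q (Aop Q d)) = 0" using orthQ[OF AdD n_not1] by simp
  have PdN: "P d = d" by (rule Pid[OF dN])
  have PAd: "P (Aop Q d) = Aop Q d" by (rule Pid[OF AdN])
  have QsQd: "Qs (Q d) = Aop Q d" unfolding Qs_def Aop_def by simp
  have QsQQd: "Qs (Q (Q d)) = Q (Aop Q d)" unfolding Qs_def using qn[of d] by (simp add: Aop_def)
  have Qsr: "Qs (r *\<^sub>R v) = r *\<^sub>R Qs v" for r v unfolding Qs_def by (rule Qs_scaleR)
  define S where "S = cadjoint R"
  have Sdef: "S v = Wi (Qs (W v))" for v unfolding S_def adjR by simp
  have Rdef: "R v = W (Q (Wi v))" for v unfolding R_def by simp
  have Rd: "R d = (1/2) *\<^sub>R Q d"
    unfolding Rdef using Wi1[OF PdN] W0 Pu by (simp add: Ql.scaleR PscaleR)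
  have SRd: "S (R d) = (1/2) *\<^sub>R ((1/2) *\<^sub>R Aop Q d)"
  proof -
    have "W ((1/2) *\<^sub>R Q d) = (1/2) *\<^sub>R Q d" by (rule W0) (simp add: PscaleR Pu)
    moreover have "Wi ((1/2) *\<^sub>R Aop Q d) = (1/2) *\<^sub>R ((1/2) *\<^sub>R Aop Q d)"
      by (rule Wi1) (simp add: PscaleR PAd)
    moreover have "S (R d) = Wi (Qs (W ((1/2) *\<^sub>R Q d)))" unfolding Rd by (rule Sdef)
    ultimately show ?thesis by (simp add: Qsr QsQd)
  qed
  have RSRd: "R (S (R d)) = (1/2) *\<^sub>R ((1/2) *\<^sub>R ((1/2) *\<^sub>R Q (Aop Q d)))"
  proof -
    have "Wi ((1/2) *\<^sub>R ((1/2) *\<^sub>R Aop Q d)) = (1/2) *\<^sub>R ((1/2) *\<^sub>R ((1/2) *\<^sub>R Aop Q d))"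
      by (rule Wi1) (simp add: PscaleR PAd)
    moreover have "W ((1/2) *\<^sub>R ((1/2) *\<^sub>R ((1/2) *\<^sub>R Q (Aop Q d)))) =
        (1/2) *\<^sub>R ((1/2) *\<^sub>R ((1/2) *\<^sub>R Q (Aop Q d)))"
      by (rule W0) (simp add: PscaleR PQAd)
    moreover have "R (S (R d)) = W (Q (Wi ((1/2) *\<^sub>R ((1/2) *\<^sub>R Aop Q d))))"
      unfolding SRd by (rule Rdef)
    ultimately show ?thesis by (simp add: Ql.scaleR)
  qed
  have RRd: "R (R d) = W ((1/2) *\<^sub>R Q (Q d))"
  proof -
    have "Wi ((1/2) *\<^sub>R Q d) = (1/2) *\<^sub>R Q d" by (rule Wi0) (simp add: PscaleR Pu)
    moreover have "R (R d) = W (Q (Wi ((1/2) *\<^sub>R Q d)))" unfolding Rd by (rule Rdef)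
    ultimately show ?thesis by (simp add: Ql.scaleR)
  qed
  have QAd_nz: "Q d = 0" if h: "Q (Aop Q d) = 0"
  proof -
    have "Aop Q (Aop Q d) = 0" unfolding Aop_def[of Q "Aop Q d"] using h Qs_zero by simp
    then have "cinner (Aop Q d) (Aop Q d) = 0" using Aself[of d "Aop Q d"] by simp
    then have "Aop Q d = 0" using cinner_eq_zero_iff by blast
    then have "cinner (Q d) (Q d) = 0" using adj[of d "Q d"] unfolding Aop_def by simp
    then show "Q d = 0" using cinner_eq_zero_iff by blast
  qed
  have key: "S (R (R d)) \<noteq> R (S (R d))"
  proof (cases "n = 2")
    case True
    have "Q (Q d) = T d" using QT True by (metis comp_apply funpow.simps(2) funpow_0 numeral_2_eq_2 o_id)
    then have PQQd: "P (Q (Q d)) = Q (Q d)" using Pid[OF TN[OF dN]] by simp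
    have "R (R d) = Q (Q d)" unfolding RRd
      by (subst W1) (simp_all add: PscaleR PQQd)
    then have "S (R (R d)) = Wi (Qs (2 *\<^sub>R Q (Q d)))" unfolding Sdef by (simp add: W1 PQQd)
    also have "Qs (2 *\<^sub>R Q (Q d)) = 2 *\<^sub>R Q (Aop Q d)" by (simp add: Qsr QsQQd)
    also have "Wi (2 *\<^sub>R Q (Aop Q d)) = 2 *\<^sub>R Q (Aop Q d)"
      by (rule Wi0) (simp add: PscaleR PQAd)
    finally have L: "S (R (R d)) = 2 *\<^sub>R Q (Aop Q d)" .
    show ?thesis
    proof
      assume "S (R (R d)) = R (S (R d))"
      then have "2 *\<^sub>R Q (Aop Q d) = (1/8) *\<^sub>R Q (Aop Q d)" unfolding L RSRd by simp
      then have "Q (Aop Q d) = 0" by (simp add: scaleR_cancel_right)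
      then show False using Qd QAd_nz by blast
    qed
  next
    case False
    then have n2: "\<not> n dvd 2" using n1 by (auto dest: dvd_imp_le)
    have PQQd: "P (Q (Q d)) = 0" using orthQ[OF dD n2] by (simp add: numeral_2_eq_2)
    have "R (R d) = (1/2) *\<^sub>R Q (Q d)" unfolding RRd
      by (rule W0) (simp add: PscaleR PQQd)
    then have "S (R (R d)) = Wi ((1/2) *\<^sub>R Q (Aop Q d))" unfolding Sdef
      by (simp add: W0 PscaleR PQQd Qsr QsQQd)
    also have "... = (1/2) *\<^sub>R Q (Aop Q d)" by (rule Wi0) (simp add: PscaleR PQAd)
    finally have L: "S (R (R d)) = (1/2) *\<^sub>R Q (Aop Q d)" .
    show ?thesis
    proof
      assume "S (R (R d)) = R (S (R d))"
      then have "(1/2) *\<^sub>R Q (Aop Q d) = (1/8) *\<^sub>R Q (Aop Q d)" unfolding L RSRd by simp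
      then have "Q (Aop Q d) = 0" by (simp add: scaleR_cancel_right)
      then show False using Qd QAd_nz by blast
    qed
  qed
  have nqR: "\<not> quasinormal_op R"
  proof
    assume "quasinormal_op R"
    then have "R (S (R d)) = S (R (R d))"
      unfolding quasinormal_op_def S_def by (metis comp_apply)
    then show False using key by simp
  qed
  show ?thesis using bR nqR RnT by blast
qed

end
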